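(* Let $1\le n\le\omega$. There is a Borel reduction $\psi\colon X_n\to X_n$ of $F_n$ to $F_n$ such that for every $x$ in the image of $\psi$, $x(i)$ is injective for all $i<n$ and $x(i)$ is separated for all $0<i<n$.
   Context: Let $\mathbb N=\{0,1,2,\dots\}$ and identify $2^{\mathbb N}$ with $\mathcal P(\mathbb N)$. For $1\le m\le\omega$ and $x\in((2^{\mathbb N})^{\mathbb N})^m$ define recursively: $A^x_1=\{x(0)(k):k\in\mathbb N\}\subseteq 2^{\mathbb N}$; for $1\le j<m$ and $l\in\mathbb N$, $a^{x,l}_1=\{x(0)(k):x(1)(l)(k)=1\}$ and $a^{x,l}_{j}=\{a^{x,k}_{j-1}:x(j)(l)(k)=1\}$ for $j\ge 2$; and $A^x_{j+1}=\{a^{x,k}_j:k\in\mathbb N\}$ for $1\le j<m$. Let $X_1=(2^{\mathbb N})^{\mathbb N}$, and for $2\le n\le\omega$ let $X_n$ be the set of $x\in((2^{\mathbb N})^{\mathbb N})^n$ such that for every $1\le i<n$: (1) for every $m$ there is $k$ with $x(i)(k)(m)=1$; (2) for every $k$ there is $m$ with $x(i)(k)(m)=1$; (3) for all $k,l_1,l_2$, if $x(i-1)(l_1)=x(i-1)(l_2)$ then $x(i)(k)(l_1)=x(i)(k)(l_2)$. For $1\le n<\omega$, $F_n$ on $X_n$ is $x\mathrel{F_n}y\iff A^x_n=A^y_n$; $F_\omega$ on $X_\omega$ is $x\mathrel{F_\omega}y\iff A^x_j=A^y_j$ for all $1\le j<\omega$. A sequence $a\in(2^{\mathbb N})^{\mathbb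 N}$ is injective if $a(i)\ne a(j)$ for $i\ne j$, and separated if for all distinct $n,k\in\mathbb N$ there is $i$ with $a(i)(n)\ne a(i)(k)$. *)

theory Defs
  imports "HOL-Analysis.Analysis" "HOL-Library.Extended_Nat"
begin

text \<open>
  Conventions.  2^N is nat => bool; (2^N)^N is nat => nat => bool.
  A point x of ((2^N)^N)^n (1 \<le> n \<le> \<omega>, n an extended natural) is represented by
  x :: nat \<Rightarrow> nat \<Rightarrow> nat \<Rightarrow> bool, where x i k m = x(i)(k)(m); coordinates i \<ge> n
  are required to be constantly False (canonical padding), so that ((2^N)^N)^n is
  identified with a closed subset of the Cantor space nat \<Rightarrow> nat \<Rightarrow> nat \<Rightarrow> bool
  (product topology, bool discrete).
\<close>

type_synonym pt = "nat \<Rightarrow> nat \<Rightarrow> nat \<Rightarrow> bool"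

text \<open>
  The sets a^{x,l}_j live in the j-fold iterated power set, so they cannot all be
  given one HOL type.  We define instead the equality of such sets, by
  extensionality.  Put a^{x,l}_0 = x(0)(l) in 2^N.  Then
  a^{x,l}_j = {a^{x,k}_{j-1} : x(j)(l)(k) = 1} for j \<ge> 1, and
  seteq_a j x k y l  holds iff  a^{x,k}_j = a^{y,l}_j.
\<close>

fun seteq_a :: "nat \<Rightarrow> pt \<Rightarrow> nat \<Rightarrow> pt \<Rightarrow> nat \<Rightarrow> bool" where
  "seteq_a 0 x k y l = (x 0 k = y 0 l)"
| "seteq_a (Suc j) x k y l =
     ((\<forall>k'. x (Suc j) k k' \<longrightarrow> (\<exists>l'. y (Suc j) l l' \<and> seteq_a j x k' y l')) \<and>
      (\<forall>l'. y (Suc j) l l' \<longrightarrow> (\<exists>k'. x (Suc j) k k' \<and> seteq_a j x k' y l')))"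

text \<open>A^x_{j+1} = {a^{x,k}_j : k \<in> N}; seteq_A (Suc j) x y holds iff A^x_{j+1} = A^y_{j+1}.\<close>

fun seteq_A :: "nat \<Rightarrow> pt \<Rightarrow> pt \<Rightarrow> bool" where
  "seteq_A 0 x y = True"
| "seteq_A (Suc j) x y =
     ((\<forall>k. \<exists>l. seteq_a j x k y l) \<and> (\<forall>l. \<exists>k. seteq_a j x k y l))"

definition Xsp :: "enat \<Rightarrow> pt set" where
  "Xsp n = {x. (\<forall>i. n \<le> enat i \<longrightarrow> x i = (\<lambda>_ _. False)) \<and>
     (\<forall>i. 1 \<le> i \<and> enat i < n \<longrightarrow>
        (\<forall>m. \<exists>k. x i k m) \<and>
        (\<forall>k. \<exists>m. x i k m) \<and>
        (\<forall>k l1 l2. x (i - 1) l1 = x (i - 1) l2 \<longrightarrow> x i k l1 = x i k l2))}"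

definition Frel :: "enat \<Rightarrow> pt \<Rightarrow> pt \<Rightarrow> bool" where
  "Frel n x y = (case n of enat m \<Rightarrow> seteq_A m x y
                          | \<infinity> \<Rightarrow> (\<forall>j\<ge>1. seteq_A j x y))"

definition injective_seq :: "(nat \<Rightarrow> nat \<Rightarrow> bool) \<Rightarrow> bool" where
  "injective_seq a = (\<forall>i j. i \<noteq> j \<longrightarrow> a i \<noteq> a j)"

definition separated_seq :: "(nat \<Rightarrow> nat \<Rightarrow> bool) \<Rightarrow> bool" where
  "separated_seq a = (\<forall>n k. n \<noteq> k \<longrightarrow> (\<exists>i. a i n \<noteq> a i k))"

definition borel_reduction :: "pt set \<Rightarrow> (pt \<Rightarrow> pt \<Rightarrow> bool) \<Rightarrow> (pt \<Rightarrow> pt \<Rightarrow> bool) \<Rightarrow> (pt \<Rightarrow> pt) \<Rightarrow> bool" where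
  "borel_reduction X E F f =
     (f \<in> measurable (restrict_space borel X) (restrict_space borel X) \<and>
      (\<forall>x\<in>X. \<forall>y\<in>X. E x y \<longleftrightarrow> F (f x) (f y)))"

end

theory Submission
  imports Defs "HOL-Library.Countable_Set_Type"
begin


datatype hs = At "nat \<Rightarrow> bool" | St "hs cset"

fun elems :: "hs \<Rightarrow> hs set" where
  "elems (At r) = {}"
| "elems (St B) = rcset B"

definition mk :: "hs set \<Rightarrow> hs" where "mk A = St (acset A)"

lemma cnt1[simp]: "countable (A::nat set)" by (rule countableI_type)
lemma cnt2[simp]: "countable (f ` (A::nat set))" by (rule countable_image) simp

lemma elems_mk[simp]: "countable A \<Longrightarrow> elems (mk A) = A"
  by (simp add: mk_def acset_inverse)

lemma mk_inject: "countable A \<Longrightarrow> countable B \<Longrightarrow> mk A = mk B \<longleftrightarrow> A = B"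
  by (metis elems_mk)

lemma image_eq_iff2: "f ` A = g ` B \<longleftrightarrow> (\<forall>a\<in>A. \<exists>b\<in>B. f a = g b) \<and> (\<forall>b\<in>B. \<exists>a\<in>A. f a = g b)"
  by (auto simp: image_iff set_eq_iff) (metis)+

fun hv :: "nat \<Rightarrow> pt \<Rightarrow> nat \<Rightarrow> hs" where
  "hv 0 x k = At (x 0 k)"
| "hv (Suc j) x k = mk (hv j x ` {k'. x (Suc j) k k'})"

lemma elems_hv: "elems (hv (Suc j) x k) = hv j x ` {k'. x (Suc j) k k'}"
  by (simp add: elems_mk)

lemma seteq_hv: "seteq_a j x k y l \<longleftrightarrow> hv j x k = hv j y l"
proof (induction j arbitrary: k l)
  case 0
  then show ?case by simp
next
  case (Suc j)
  have "hv (Suc j) x k = hv (Suc j) y l \<longleftrightarrow>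
        hv j x ` {k'. x (Suc j) k k'} = hv j y ` {l'. y (Suc j) l l'}"
    by (simp add: mk_inject)
  also have "\<dots> \<longleftrightarrow> seteq_a (Suc j) x k y l"
    unfolding image_eq_iff2 seteq_a.simps Suc by simp
  finally show ?case by simp
qed

lemma range_eq_iff2: "range f = range g \<longleftrightarrow> (\<forall>k. \<exists>l. f k = g l) \<and> (\<forall>l. \<exists>k. f k = g l)"
proof
  assume h: "range f = range g"
  show "(\<forall>k. \<exists>l. f k = g l) \<and> (\<forall>l. \<exists>k. f k = g l)"
  proof (intro conjI allI)
    fix k have "f k \<in> range g" using h by (metis rangeI) then show "\<exists>l. f k = g l" by auto
  next
    fix l have "g l \<in> range f" using h by (metis rangeI) then show "\<exists>k. f k = g l" by (metis imageE)
  qed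
next
  assume "(\<forall>k. \<exists>l. f k = g l) \<and> (\<forall>l. \<exists>k. f k = g l)"
  then show "range f = range g" by (auto simp: image_iff) (metis)
qed

lemma seteq_hv_fun: "seteq_a j x k y = (\<lambda>l. hv j x k = hv j y l)"
  by (rule ext) (rule seteq_hv)

lemma seteqA_hv: "seteq_A (Suc j) x y \<longleftrightarrow> range (hv j x) = range (hv j y)"
  by (simp add: seteq_hv seteq_hv_fun range_eq_iff2)

primrec G :: "hs \<Rightarrow> hs" where
  "G (At r) = At (\<lambda>m. case m of 0 \<Rightarrow> False | Suc m' \<Rightarrow> r m')"
| "G (St B) = St (cimage G B)"

definition tagr :: "nat \<Rightarrow> nat \<Rightarrow> bool" where
  "tagr t = (\<lambda>m. case m of 0 \<Rightarrow> True | Suc m' \<Rightarrow> m' = t)"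

fun T :: "nat \<Rightarrow> nat \<Rightarrow> hs" where
  "T 0 t = At (tagr t)"
| "T (Suc j) t = mk {T j t}"

lemma elems_G: "elems (G h) = G ` elems h"
  by (cases h) (auto simp: cimage.rep_eq)

lemma T_inj: "T j t = T j t' \<Longrightarrow> t = t'"
proof (induction j)
  case 0
  then show ?case by (simp add: tagr_def fun_eq_iff) (metis nat.simps(5))
next
  case (Suc j)
  then show ?case by (simp add: mk_inject)
qed

lemma G_inj: "G a = G b \<Longrightarrow> a = b"
proof (induction a arbitrary: b)
  case (At r)
  then show ?case
  proof (cases b)
    case (At r')
    have "\<And>m. r m = r' m"
    proof -
      fix m
      have "(\<lambda>m. case m of 0 \<Rightarrow> False | Suc m' \<Rightarrow> r m') (Suc m) = (\<lambda>m. case m of 0 \<Rightarrow> False | Suc m' \<Rightarrow> r' m') (Suc m)"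
        using At.prems At by simp
      then show "r m = r' m" by simp
    qed
    then show ?thesis using At by auto
  next
    case (St B) then show ?thesis using At.prems by simp
  qed
next
  case (St A)
  then obtain B where b: "b = St B" by (cases b) auto
  have "G ` rcset A = G ` rcset B"
    using St.prems b by (metis elems.simps(2) elems_G)
  then have "rcset A = rcset B"
  proof (intro equalityI subsetI)
    fix a assume "a \<in> rcset A"
    moreover from this \<open>G ` rcset A = G ` rcset B\<close> obtain b' where "b' \<in> rcset B" "G a = G b'"
      by (metis imageE imageI)
    ultimately show "a \<in> rcset B" using St.IH by metis
  next
    fix b' assume "b' \<in> rcset B"
    moreover from this \<open>G ` rcset A = G ` rcset B\<close> obtain a where "a \<in> rcset A" "G b' = G a"
      by (metis imageE imageI)
    ultimately show "b' \<in> rcset A" using St.IH by metis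
  qed
  then show ?case using b by (metis rcset_inverse)
qed

lemma G_ne_T: "G a \<noteq> T j t"
proof (induction a arbitrary: j)
  case (At r)
  then show ?case by (cases j) (auto simp: tagr_def fun_eq_iff mk_def intro: exI[of _ 0])
next
  case (St A)
  show ?case
  proof (cases j)
    case 0 then show ?thesis by simp
  next
    case (Suc i)
    show ?thesis
    proof
      assume "G (St A) = T j t"
      then have "elems (G (St A)) = {T i t}" using Suc by (simp add: elems_mk)
      then have "T i t \<in> G ` rcset A" by (simp add: cimage.rep_eq)
      then show False using St.IH by (metis imageE)
    qed
  qed
qed



definition R :: "enat \<Rightarrow> pt \<Rightarrow> pt" where
 "R n x j k = (if n \<le> enat j then (\<lambda>_. False) else
    (case j of 0 \<Rightarrow> (if k mod 3 = 1 then (\<lambda>m. case m of 0 \<Rightarrow> False | Suc m' \<Rightarrow> x 0 (k div 3) m') else tagr (k div 3))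
     | Suc i \<Rightarrow> (if k mod 3 = 0 then (\<lambda>p. p = k)
                 else if k mod 3 = 1 then (\<lambda>p. p mod 3 = 1 \<and> x (Suc i) (k div 3) (p div 3))
                 else (\<lambda>p. p = k div 3 \<or> p = 0))))"

lemma p_mod3_1: "p mod 3 = Suc 0 \<Longrightarrow> p = Suc (3*(p div 3))" by presburger

lemma m3[simp]: "Suc (3*a) mod 3 = 1" "Suc (3*a) div 3 = a" "Suc (Suc (3*a)) mod 3 = 2"
   "Suc (Suc (3*a)) div 3 = a" "(3*a) mod 3 = 0" "(3*a) div 3 = (a::nat)"
  by presburger+

lemma enat_lt_le: "enat j < n \<Longrightarrow> \<not> n \<le> enat j"
  by auto

lemma R_0: "enat 0 < n \<Longrightarrow> R n x 0 k = (if k mod 3 = 1 then (\<lambda>m. case m of 0 \<Rightarrow> False | Suc m' \<Rightarrow> x 0 (k div 3) m') else tagr (k div 3))"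
  unfolding R_def using enat_lt_le by auto

lemma R_Suc: "enat (Suc i) < n \<Longrightarrow> R n x (Suc i) k = (if k mod 3 = 0 then (\<lambda>p. p = k)
                 else if k mod 3 = 1 then (\<lambda>p. p mod 3 = 1 \<and> x (Suc i) (k div 3) (p div 3))
                 else (\<lambda>p. p = k div 3 \<or> p = 0))"
  unfolding R_def using enat_lt_le by auto

lemma enat_Suc_lt: "enat (Suc j) < n \<Longrightarrow> enat j < n"
  by (metis Suc_n_not_le_n enat_ord_simps(2) le_less_linear less_le_trans order.strict_implies_order linorder_not_le)

lemma elems_R: "elems (hv (Suc j) (R n x) k) = hv j (R n x) ` {p. R n x (Suc j) k p}"
  by (rule elems_hv)

lemma hvR_T: "enat j < n \<Longrightarrow> hv j (R n x) (3*t) = T j t"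
proof (induction j)
  case 0 then show ?case by (auto simp: R_0 R_Suc)
next
  case (Suc j)
  have "{p. R n x (Suc j) (3*t) p} = {3*t}" using Suc.prems by (auto simp: R_0 R_Suc)
  then have "hv (Suc j) (R n x) (3*t) = mk (hv j (R n x) ` {3*t})"
    by simp
  then show ?case using Suc enat_Suc_lt by simp
qed

lemma hvR_G: "enat j < n \<Longrightarrow> hv j (R n x) (3*a+1) = G (hv j x a)"
proof (induction j arbitrary: a)
  case 0 then show ?case by (auto simp: R_0 R_Suc)
next
  case (Suc j)
  have "{p. R n x (Suc j) (3*a+1) p} = (\<lambda>c. 3*c+1) ` {c. x (Suc j) a c}"
  proof (intro equalityI subsetI)
    fix p assume "p \<in> {p. R n x (Suc j) (3*a+1) p}"
    then have "p mod 3 = 1" "x (Suc j) a (p div 3)" using Suc.prems by (auto simp: R_0 R_Suc)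
    moreover have "p = 3*(p div 3)+1" using \<open>p mod 3 = 1\<close> by presburger
    ultimately show "p \<in> (\<lambda>c. 3*c+1) ` {c. x (Suc j) a c}" by (metis (mono_tags, lifting) imageI mem_Collect_eq)
  next
    fix p assume "p \<in> (\<lambda>c. 3*c+1) ` {c. x (Suc j) a c}"
    then show "p \<in> {p. R n x (Suc j) (3*a+1) p}" using Suc.prems by (auto simp: R_0 R_Suc)
  qed
  then have "hv (Suc j) (R n x) (3*a+1) = mk ((\<lambda>c. G (hv j x c)) ` {c. x (Suc j) a c})"
    using Suc enat_Suc_lt by (simp add: image_image)
  also have "\<dots> = G (hv (Suc j) x a)"
    by (simp add: mk_def cimage_def acset_inverse image_image)
  finally show ?case .
qed

lemma hvR_S0: "enat 0 < n \<Longrightarrow> hv 0 (R n x) (3*a+2) = T 0 a"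
  by (auto simp: R_0 R_Suc)

lemma hvR_S: "enat (Suc j) < n \<Longrightarrow> hv (Suc j) (R n x) (3*a+2) = mk {hv j (R n x) a, hv j (R n x) 0}"
proof -
  assume a: "enat (Suc j) < n"
  have "{p. R n x (Suc j) (3*a+2) p} = {a, 0}" using a by (auto simp: R_0 R_Suc)
  then show ?thesis by simp
qed

lemma hvR_G': "enat j < n \<Longrightarrow> hv j (R n x) (Suc (3*a)) = G (hv j x a)"
  using hvR_G[of j n x a] by (simp del: hv.simps G.simps)

lemma hvR_S': "enat (Suc j) < n \<Longrightarrow> hv (Suc j) (R n x) (Suc (Suc (3*a))) = mk {hv j (R n x) a, hv j (R n x) 0}"
  using hvR_S[of j n x a] by (simp del: hv.simps)

lemma idx3: fixes k :: nat obtains t where "k = 3*t" | a where "k = 3*a+1" | a where "k = 3*a+2"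
proof -
  have "k = 3*(k div 3) \<or> k = 3*(k div 3)+1 \<or> k = 3*(k div 3)+2" by presburger
  then show thesis using that by blast
qed

lemma range_R0: "enat 0 < n \<Longrightarrow> range (hv 0 (R n x)) = range (T 0) \<union> G ` range (hv 0 x)"
proof (intro equalityI subsetI)
  fix v assume a: "enat 0 < n" "v \<in> range (hv 0 (R n x))"
  then obtain k where k: "v = hv 0 (R n x) k" by auto
  show "v \<in> range (T 0) \<union> G ` range (hv 0 x)"
  proof (rule idx3[of k])
    fix t assume "k = 3*t" then have "v = T 0 t" using a k hvR_T[of 0 n x t] by (simp del: hv.simps T.simps)
    then show ?thesis by blast
  next
    fix b assume "k = 3*b+1" then have "v = G (hv 0 x b)" using a k hvR_G[of 0 n x b] by (simp del: hv.simps G.simps)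
    then show ?thesis by blast
  next
    fix b assume "k = 3*b+2" then have "v = T 0 b" using a k hvR_S0[of n x b] by (simp del: hv.simps T.simps)
    then show ?thesis by blast
  qed
next
  fix v assume a: "enat 0 < n" "v \<in> range (T 0) \<union> G ` range (hv 0 x)"
  then consider t where "v = T 0 t" | b where "v = G (hv 0 x b)" by blast
  then show "v \<in> range (hv 0 (R n x))"
  proof cases
    case 1 then show ?thesis using hvR_T[of 0 n x t] a by (metis rangeI)
  next
    case 2 then show ?thesis using hvR_G[of 0 n x b] a by (metis rangeI)
  qed
qed

lemma range_RS: "enat (Suc j) < n \<Longrightarrow> range (hv (Suc j) (R n x)) =
   range (T (Suc j)) \<union> G ` range (hv (Suc j) x) \<union> (\<lambda>u. mk {u, T j 0}) ` range (hv j (R n x))"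
proof (intro equalityI subsetI)
  fix v assume a: "enat (Suc j) < n" "v \<in> range (hv (Suc j) (R n x))"
  then obtain k where k: "v = hv (Suc j) (R n x) k" by auto
  have t0: "hv j (R n x) 0 = T j 0" using hvR_T[of j n x 0] a enat_Suc_lt by (simp del: hv.simps T.simps)
  show "v \<in> range (T (Suc j)) \<union> G ` range (hv (Suc j) x) \<union> (\<lambda>u. mk {u, T j 0}) ` range (hv j (R n x))"
  proof (rule idx3[of k])
    fix t assume "k = 3*t" then have "v = T (Suc j) t" using a k hvR_T[of "Suc j" n x t] by (simp del: hv.simps T.simps)
    then show ?thesis by blast
  next
    fix b assume "k = 3*b+1" then have "v = G (hv (Suc j) x b)" using a k hvR_G[of "Suc j" n x b] by (simp del: hv.simps G.simps)
    then show ?thesis by blast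
  next
    fix b assume "k = 3*b+2" then have "v = mk {hv j (R n x) b, T j 0}" using a k hvR_S[of j n x b] t0 by (simp del: hv.simps T.simps)
    then show ?thesis by blast
  qed
next
  fix v assume a: "enat (Suc j) < n" "v \<in> range (T (Suc j)) \<union> G ` range (hv (Suc j) x) \<union> (\<lambda>u. mk {u, T j 0}) ` range (hv j (R n x))"
  have t0: "hv j (R n x) 0 = T j 0" using hvR_T[of j n x 0] a enat_Suc_lt by (simp del: hv.simps T.simps)
  from a consider t where "v = T (Suc j) t" | b where "v = G (hv (Suc j) x b)" | b where "v = mk {hv j (R n x) b, T j 0}" by blast
  then show "v \<in> range (hv (Suc j) (R n x))"
  proof cases
    case 1 then show ?thesis using hvR_T[of "Suc j" n x t] a by (metis rangeI)
  next
    case 2 then show ?thesis using hvR_G[of "Suc j" n x b] a by (metis rangeI)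
  next
    case 3 then show ?thesis using hvR_S[of j n x b] a t0 by (metis rangeI)
  qed
qed

lemma G_ne_S: "G v \<noteq> mk {u, T j 0}"
proof
  assume "G v = mk {u, T j 0}"
  then have "T j 0 \<in> elems (G v)" by (simp add: elems_mk)
  then show False using G_ne_T by (metis elems_G imageE)
qed

lemma inj_G: "inj G" using G_inj by (rule injI)

lemma G_in_R: "enat j < n \<Longrightarrow> (G v \<in> range (hv j (R n x))) = (v \<in> range (hv j x))"
proof (cases j)
  case 0
  assume j: "enat j < n"
  have "(G v \<in> range (hv j (R n x))) = (G v \<in> G ` range (hv j x))"
    unfolding 0 range_R0[OF j[unfolded 0]] using G_ne_T by blast
  then show ?thesis using inj_image_mem_iff[OF inj_G] by simp
next
  case (Suc i)
  assume j: "enat j < n"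
  have "(G v \<in> range (hv j (R n x))) = (G v \<in> G ` range (hv j x))"
    unfolding Suc range_RS[OF j[unfolded Suc]] using G_ne_T G_ne_S by blast
  then show ?thesis using inj_image_mem_iff[OF inj_G] by simp
qed

lemma R_back: "enat j < n \<Longrightarrow> range (hv j (R n x)) = range (hv j (R n y)) \<Longrightarrow> range (hv j x) = range (hv j y)"
  by (metis G_in_R subsetI subset_antisym)

lemma R_fwd: "enat j < n \<Longrightarrow> (\<forall>i\<le>j. range (hv i x) = range (hv i y)) \<Longrightarrow> range (hv j (R n x)) = range (hv j (R n y))"
proof (induction j)
  case 0
  have "range (hv 0 x) = range (hv 0 y)" using 0 by blast
  then show ?case unfolding range_R0[OF 0(1), of x] range_R0[OF 0(1), of y] by (rule arg_cong)
next
  case (Suc j)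
  have j: "enat j < n" using enat_Suc_lt[OF Suc.prems(1)] .
  have e1: "range (hv (Suc j) x) = range (hv (Suc j) y)" using Suc.prems by blast
  have e2: "range (hv j (R n x)) = range (hv j (R n y))" using Suc j by simp
  show ?case unfolding range_RS[OF Suc.prems(1), of x] range_RS[OF Suc.prems(1), of y] e1 e2 by (rule refl)
qed

lemma Xsp_D: "x \<in> Xsp n \<Longrightarrow> enat (Suc j) < n \<Longrightarrow> (\<forall>m. \<exists>k. x (Suc j) k m) \<and> (\<forall>k. \<exists>m. x (Suc j) k m)"
proof -
  assume x: "x \<in> Xsp n" and j: "enat (Suc j) < n"
  have X: "\<forall>i. 1 \<le> i \<and> enat i < n \<longrightarrow> (\<forall>m. \<exists>k. x i k m) \<and> (\<forall>k. \<exists>m. x i k m)"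
    using x unfolding Xsp_def by blast
  show ?thesis using X[rule_format, of "Suc j"] j by simp
qed

lemma cover: "x \<in> Xsp n \<Longrightarrow> enat (Suc j) < n \<Longrightarrow> range (hv j x) = \<Union> (elems ` range (hv (Suc j) x))"
proof -
  assume x: "x \<in> Xsp n" and j: "enat (Suc j) < n"
  have c: "\<forall>m. \<exists>k. x (Suc j) k m" using Xsp_D[OF x j] by blast
  show ?thesis
  proof (intro equalityI subsetI)
    fix v assume "v \<in> range (hv j x)"
    then obtain m where m: "v = hv j x m" by auto
    obtain k where "x (Suc j) k m" using c by auto
    then show "v \<in> \<Union> (elems ` range (hv (Suc j) x))" using m by (auto simp: elems_hv)
  qed (auto simp: elems_hv)
qed

lemma down: "x \<in> Xsp n \<Longrightarrow> y \<in> Xsp n \<Longrightarrow> enat m < n \<Longrightarrow> range (hv m x) = range (hv m y) \<Longrightarrow>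
   i \<le> m \<Longrightarrow> range (hv i x) = range (hv i y)"
proof (induction "m - i" arbitrary: i)
  case 0 then show ?case by simp
next
  case (Suc d)
  have si: "Suc i \<le> m" "d = m - Suc i" using Suc.hyps(2) by auto
  have h: "range (hv (Suc i) x) = range (hv (Suc i) y)"
    using Suc.hyps(1)[OF si(2) Suc.prems(1-4) si(1)] .
  have "enat (Suc i) < n" using si(1) Suc.prems(3) by (meson enat_ord_simps(1) le_less_trans)
  then show ?case using cover[OF Suc.prems(1)] cover[OF Suc.prems(2)] h by metis
qed



definition FO :: "nat \<Rightarrow> pt \<Rightarrow> nat set" where
  "FO j z = {k. \<forall>k'<k. hv j z k' \<noteq> hv j z k}"

definition en :: "nat \<Rightarrow> pt \<Rightarrow> nat \<Rightarrow> nat" where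
  "en j z = enumerate (FO j z)"

definition D :: "enat \<Rightarrow> pt \<Rightarrow> pt" where
 "D n z j l = (if n \<le> enat j then (\<lambda>_. False) else
   (case j of 0 \<Rightarrow> z 0 (en 0 z l)
    | Suc i \<Rightarrow> (\<lambda>p. \<exists>k'. z (Suc i) (en (Suc i) z l) k' \<and> hv i z k' = hv i z (en i z p))))"

lemma D_0: "enat 0 < n \<Longrightarrow> D n z 0 l = z 0 (en 0 z l)"
  unfolding D_def using enat_lt_le by auto

lemma D_Suc: "enat (Suc i) < n \<Longrightarrow> D n z (Suc i) l = (\<lambda>p. \<exists>k'. z (Suc i) (en (Suc i) z l) k' \<and> hv i z k' = hv i z (en i z p))"
  unfolding D_def using enat_lt_le by auto

lemma FO_range: "hv j z ` FO j z = range (hv j z)"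
proof (intro equalityI subsetI)
  fix v assume "v \<in> range (hv j z)"
  then obtain k where k: "v = hv j z k" by auto
  define k0 where "k0 = (LEAST k0. hv j z k0 = hv j z k)"
  have e: "hv j z k0 = hv j z k" unfolding k0_def by (rule LeastI) (rule refl)
  have "k0 \<in> FO j z" unfolding FO_def
  proof (safe)
    fix k' assume "k' < k0" "hv j z k' = hv j z k0"
    then have "hv j z k' = hv j z k" using e by simp
    then have "k0 \<le> k'" unfolding k0_def by (rule Least_le)
    then show False using \<open>k' < k0\<close> by simp
  qed
  then show "v \<in> hv j z ` FO j z" using e k by (metis imageI)
qed auto

lemma FO_inf: "infinite (range (hv j z)) \<Longrightarrow> infinite (FO j z)"
  by (metis FO_range finite_imageI)

lemma range_en: "infinite (range (hv j z)) \<Longrightarrow> range (en j z) = FO j z"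
  unfolding en_def using FO_inf bij_enumerate bij_betw_def by metis

lemma en_range: "infinite (range (hv j z)) \<Longrightarrow> range (\<lambda>l. hv j z (en j z l)) = range (hv j z)"
  using range_en[of j z] FO_range[of j z] by (metis image_image)

lemma en_inj_val: assumes "infinite (range (hv j z))" "l \<noteq> l'"
  shows "hv j z (en j z l) \<noteq> hv j z (en j z l')"
proof -
  have I: "infinite (FO j z)" using assms FO_inf by auto
  have *: "hv j z (en j z a) \<noteq> hv j z (en j z b)" if "a < b" for a b
  proof -
    have "en j z a < en j z b" using that I unfolding en_def by (simp add: enumerate_mono)
    moreover have "en j z b \<in> FO j z" using I unfolding en_def by (simp add: enumerate_in_set)
    ultimately show ?thesis unfolding FO_def by auto
  qed
  show ?thesis using assms(2) *[of l l'] *[of l' l] by (metis linorder_neqE_nat)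
qed

lemma D_row: "enat (Suc j) < n \<Longrightarrow>
   D n z (Suc j) l p = (hv j z (en j z p) \<in> elems (hv (Suc j) z (en (Suc j) z l)))"
  by (auto simp: D_Suc elems_hv image_iff)

lemma D_pad: "n \<le> enat j \<Longrightarrow> D n z j = (\<lambda>_ _. False)"
  by (auto simp: D_def fun_eq_iff)

locale Dloc =
  fixes n :: enat and z :: pt
  assumes infR: "\<And>i. enat i < n \<Longrightarrow> infinite (range (hv i z))"
begin

lemma hv_D: "enat j < n \<Longrightarrow> hv j (D n z) l = hv j z (en j z l)"
proof (induction j arbitrary: l)
  case 0 then show ?case by (auto simp: D_0)
next
  case (Suc j)
  have jl: "enat j < n" using Suc.prems enat_Suc_lt by auto
  let ?e = "en (Suc j) z l"
  have "hv j (D n z) ` {p. D n z (Suc j) l p} = (\<lambda>p. hv j z (en j z p)) ` {p. hv j z (en j z p) \<in> elems (hv (Suc j) z ?e)}"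
    using Suc jl by (simp add: D_row)
  also have "\<dots> = elems (hv (Suc j) z ?e)"
  proof (intro equalityI subsetI)
    fix w assume w: "w \<in> elems (hv (Suc j) z ?e)"
    then have "w \<in> range (hv j z)" by (auto simp: elems_hv)
    then have "w \<in> range (\<lambda>p. hv j z (en j z p))" using en_range infR jl by metis
    then show "w \<in> (\<lambda>p. hv j z (en j z p)) ` {p. hv j z (en j z p) \<in> elems (hv (Suc j) z ?e)}"
      using w by auto
  qed auto
  finally have "hv j (D n z) ` {p. D n z (Suc j) l p} = elems (hv (Suc j) z ?e)" .
  then show ?case by (simp add: elems_hv)
qed

lemma range_D: "enat j < n \<Longrightarrow> range (hv j (D n z)) = range (hv j z)"
proof -
  assume j: "enat j < n"
  have "range (hv j (D n z)) = range (\<lambda>l. hv j z (en j z l))" using hv_D[OF j] by simp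
  then show ?thesis using en_range infR[OF j] by simp
qed

end


lemma hv_row: "x j k = x j k' \<Longrightarrow> hv j x k = hv j x k'"
  by (cases j) auto

locale Dloc2 = Dloc +
  assumes covz: "\<And>j a. enat (Suc j) < n \<Longrightarrow> \<exists>c. hv j z a \<in> elems (hv (Suc j) z c)"
    and nez: "\<And>j c. enat (Suc j) < n \<Longrightarrow> elems (hv (Suc j) z c) \<noteq> {}"
    and sepz: "\<And>j a b. enat (Suc j) < n \<Longrightarrow> hv j z a \<noteq> hv j z b \<Longrightarrow>
        \<exists>c. (hv j z a \<in> elems (hv (Suc j) z c)) \<noteq> (hv j z b \<in> elems (hv (Suc j) z c))"
begin

lemma D_inj: "enat j < n \<Longrightarrow> D n z j l1 = D n z j l2 \<Longrightarrow> l1 = l2"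
  using hv_row[of "D n z" j l1 l2] hv_D en_inj_val infR by metis

lemma en_hit: "enat j < n \<Longrightarrow> \<exists>l. hv j z (en j z l) = hv j z c"
  using en_range[of j z] infR by (metis rangeE rangeI)

lemma D_Xsp_aux: "1 \<le> i \<and> enat i < n \<Longrightarrow> (\<forall>m. \<exists>k. D n z i k m) \<and>
        (\<forall>k. \<exists>m. D n z i k m) \<and>
        (\<forall>k l1 l2. D n z (i - 1) l1 = D n z (i - 1) l2 \<longrightarrow> D n z i k l1 = D n z i k l2)"
proof (intro conjI)
  assume i: "1 \<le> i \<and> enat i < n"
  then obtain j where j: "i = Suc j" by (cases i) auto
  have jn: "enat (Suc j) < n" using i j by simp
  have jn': "enat j < n" using jn enat_Suc_lt by simp
  show "\<forall>m. \<exists>k. D n z i k m"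
  proof
    fix m
    obtain c where c: "hv j z (en j z m) \<in> elems (hv (Suc j) z c)" using covz[OF jn] by blast
    obtain k where "hv (Suc j) z (en (Suc j) z k) = hv (Suc j) z c" using en_hit[OF jn] by blast
    then show "\<exists>k. D n z i k m" using c j D_row[OF jn] by metis
  qed
  assume i: "1 \<le> i \<and> enat i < n"
  then obtain j where j: "i = Suc j" by (cases i) auto
  have jn: "enat (Suc j) < n" using i j by simp
  have jn': "enat j < n" using jn enat_Suc_lt by simp
  show "\<forall>k. \<exists>m. D n z i k m"
  proof
    fix k
    obtain w where w: "w \<in> elems (hv (Suc j) z (en (Suc j) z k))" using nez[OF jn] by blast
    then obtain c where "w = hv j z c" by (auto simp: elems_hv)
    then obtain m where "hv j z (en j z m) = w" using en_hit[OF jn'] by metis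
    then show "\<exists>m. D n z i k m" using w j D_row[OF jn] by metis
  qed
  assume i: "1 \<le> i \<and> enat i < n"
  then obtain j where j: "i = Suc j" by (cases i) auto
  have jn: "enat (Suc j) < n" using i j by simp
  have jn': "enat j < n" using jn enat_Suc_lt by simp
  show "\<forall>k l1 l2. D n z (i - 1) l1 = D n z (i - 1) l2 \<longrightarrow> D n z i k l1 = D n z i k l2"
    using D_inj[OF jn'] j by auto
qed

lemma D_Xsp: "D n z \<in> Xsp n"
  unfolding Xsp_def using D_Xsp_aux D_pad by blast

lemma D_injective: "enat i < n \<Longrightarrow> injective_seq (D n z i)"
  unfolding injective_seq_def using D_inj by blast

lemma D_separated: "0 < i \<Longrightarrow> enat i < n \<Longrightarrow> separated_seq (D n z i)"
  unfolding separated_seq_def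
proof (intro allI impI)
  fix p q :: nat assume i: "0 < i" "enat i < n" and pq: "p \<noteq> q"
  then obtain j where j: "i = Suc j" by (cases i) auto
  have jn: "enat (Suc j) < n" using i j by simp
  have jn': "enat j < n" using jn enat_Suc_lt by simp
  have ne: "hv j z (en j z p) \<noteq> hv j z (en j z q)" using en_inj_val infR jn' pq by blast
  obtain c where c: "(hv j z (en j z p) \<in> elems (hv (Suc j) z c)) \<noteq> (hv j z (en j z q) \<in> elems (hv (Suc j) z c))"
    using sepz[OF jn ne] by blast
  obtain k where "hv (Suc j) z (en (Suc j) z k) = hv (Suc j) z c" using en_hit[OF jn] by blast
  then show "\<exists>k. D n z i k p \<noteq> D n z i k q" using c j D_row[OF jn] by metis
qed

end

lemma Dloc2_R: assumes x: "x \<in> Xsp n" shows "Dloc2 n (R n x)"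
proof (unfold_locales)
  fix i assume i: "enat i < n"
  have "range (T i) \<subseteq> range (hv i (R n x))"
    using hvR_T[OF i] by (metis image_subsetI rangeI)
  moreover have "infinite (range (T i))"
    using T_inj by (metis finite_imageD injI infinite_UNIV_nat)
  ultimately show "infinite (range (hv i (R n x)))" using finite_subset by blast
next
  fix j a assume jn: "enat (Suc j) < n"
  show "\<exists>c. hv j (R n x) a \<in> elems (hv (Suc j) (R n x) c)"
    by (rule exI[of _ "3*a+2"]) (simp add: hvR_S'[OF jn] elems_mk del: hv.simps)
next
  fix j c assume jn: "enat (Suc j) < n"
  show "elems (hv (Suc j) (R n x) c) \<noteq> {}"
  proof (rule idx3[of c])
    fix t assume "c = 3*t" then show ?thesis using hvR_T[OF jn] by (simp add: elems_mk del: hv.simps)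
  next
    fix b assume cb: "c = 3*b+1"
    have "\<forall>k. \<exists>m. x (Suc j) k m" using Xsp_D[OF x jn] by blast
    then obtain m where "x (Suc j) b m" by blast
    then have "hv j x m \<in> elems (hv (Suc j) x b)" by (auto simp: elems_hv)
    then show ?thesis using cb hvR_G'[OF jn] by (auto simp: elems_G simp del: hv.simps)
  next
    fix b assume "c = 3*b+2" then show ?thesis using hvR_S'[OF jn] by (simp add: elems_mk del: hv.simps)
  qed
next
  fix j a b assume jn: "enat (Suc j) < n" and ne: "hv j (R n x) a \<noteq> hv j (R n x) b"
  show "\<exists>c. (hv j (R n x) a \<in> elems (hv (Suc j) (R n x) c)) \<noteq> (hv j (R n x) b \<in> elems (hv (Suc j) (R n x) c))"
  proof (cases "hv j (R n x) b = hv j (R n x) 0")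
    case False
    then show ?thesis using ne by (intro exI[of _ "3*a+2"]) (simp add: hvR_S'[OF jn] elems_mk del: hv.simps)
  next
    case True
    have "hv (Suc j) (R n x) (3*0) = mk {hv j (R n x) 0}"
      using hvR_T[OF jn, of x 0] hvR_T[OF enat_Suc_lt[OF jn], of x 0] by simp
    then show ?thesis using ne True by (intro exI[of _ 0]) (simp add: elems_mk del: hv.simps)
  qed
qed



abbreviation bpred where "bpred M P \<equiv> P \<in> measurable M (count_space (UNIV::bool set))"
lemma sets_borel_bool: "sets (borel::bool measure) = sets (count_space UNIV)"
proof -
  have h: "A \<in> sets (borel::bool measure)" for A :: "bool set"
    by (rule borel_open) (rule open_discrete)
  show ?thesis by (rule set_eqI) (simp only: h sets_count_space Pow_UNIV UNIV_I)
qed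

lemma meas_bool_eq: "measurable M (borel::bool measure) = measurable M (count_space UNIV)"
  by (rule measurable_cong_sets[OF refl sets_borel_bool])

lemma pred_borel_bool: "bpred M P \<Longrightarrow> P \<in> borel_measurable M"
  by (subst meas_bool_eq)

lemma borel_bool_pred: "P \<in> borel_measurable M \<Longrightarrow> bpred M P"
  by (subst (asm) meas_bool_eq)

instance bool :: second_countable_topology
proof
  show "\<exists>B::bool set set. countable B \<and> open = generate_topology B"
    by (intro exI[of _ UNIV]) (auto simp: fun_eq_iff open_discrete intro: generate_topology.Basis countable_finite)
qed

lemma meas_pt:
  fixes f :: "'a \<Rightarrow> pt"
  assumes "\<And>j k p. bpred M (\<lambda>x. f x j k p)"
  shows "f \<in> borel_measurable M"
proof (rule measurable_coordinatewise_then_product)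
  fix j show "(\<lambda>x. f x j) \<in> borel_measurable M"
  proof (rule measurable_coordinatewise_then_product)
    fix k show "(\<lambda>x. f x j k) \<in> borel_measurable M"
    proof (rule measurable_coordinatewise_then_product)
      fix p show "(\<lambda>x. f x j k p) \<in> borel_measurable M"
        by (rule pred_borel_bool) (rule assms)
    qed
  qed
qed

lemma pred_coord: "bpred borel (\<lambda>x::pt. x j k p)"
proof -
  have "(\<lambda>x::pt. x) \<in> borel_measurable borel" by simp
  then have "(\<lambda>x::pt. x j) \<in> borel_measurable borel" by (rule measurable_product_then_coordinatewise)
  then have "(\<lambda>x::pt. x j k) \<in> borel_measurable borel" by (rule measurable_product_then_coordinatewise)
  then have "(\<lambda>x::pt. x j k p) \<in> borel_measurable borel" by (rule measurable_product_then_coordinatewise)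
  then show ?thesis by (rule borel_bool_pred)
qed

lemma pred_seteq:
  fixes f :: "pt \<Rightarrow> pt"
  assumes [measurable]: "\<And>j k p. bpred borel (\<lambda>x. f x j k p)"
  shows "bpred borel (\<lambda>x. seteq_a j (f x) a (f x) b)"
proof (induction j arbitrary: a b)
  case 0
  have *: "(\<lambda>x. seteq_a 0 (f x) a (f x) b) = (\<lambda>x. \<forall>m. f x 0 a m = f x 0 b m)"
    by (auto simp: fun_eq_iff)
  show ?case unfolding * by measurable
next
  case (Suc j)
  note [measurable] = Suc
  show ?case unfolding seteq_a.simps by measurable
qed

lemma pred_hv_eq:
  fixes f :: "pt \<Rightarrow> pt"
  assumes "\<And>j k p. bpred borel (\<lambda>x. f x j k p)"
  shows "bpred borel (\<lambda>x. hv j (f x) a = hv j (f x) b)"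
  using pred_seteq[OF assms] by (simp add: seteq_hv)

lemma enum_eq_iff:
  fixes S :: "nat set"
  assumes S: "infinite S"
  shows "enumerate S l = k \<longleftrightarrow> k \<in> S \<and> card {k'\<in>S. k' < k} = l"
proof -
  have c: "card {k'\<in>S. k' < enumerate S i} = i" for i
  proof -
    have "{k'\<in>S. k' < enumerate S i} = enumerate S ` {..<i}"
    proof (intro equalityI subsetI)
      fix k' assume "k' \<in> {k'\<in>S. k' < enumerate S i}"
      then obtain t where "enumerate S t = k'" "enumerate S t < enumerate S i" using enumerate_Ex[OF S] by auto
      then show "k' \<in> enumerate S ` {..<i}" using S by auto
    qed (auto simp: S enumerate_in_set)
    then show ?thesis using inj_enumerate[OF S] by (simp add: card_image inj_on_subset)
  qed
  show ?thesis
  proof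
    assume "enumerate S l = k" then show "k \<in> S \<and> card {k'\<in>S. k' < k} = l"
      using c enumerate_in_set[OF S] by auto
  next
    assume a: "k \<in> S \<and> card {k'\<in>S. k' < k} = l"
    then obtain t where t: "enumerate S t = k" using enumerate_Ex[OF S] by auto
    then show "enumerate S l = k" using c[of t] a by auto
  qed
qed

lemma card_pred_form:
  "(card {k'\<in>S. k' < k} = l) \<longleftrightarrow> (\<exists>A\<in>Pow {..<k}. card A = l \<and> (\<forall>k'<k. (k' \<in> S) = (k' \<in> A)))"
proof
  assume "card {k'\<in>S. k' < k} = l"
  then show "\<exists>A\<in>Pow {..<k}. card A = l \<and> (\<forall>k'<k. (k' \<in> S) = (k' \<in> A))"
    by (intro bexI[of _ "{k'\<in>S. k' < k}"]) auto
next
  assume "\<exists>A\<in>Pow {..<k}. card A = l \<and> (\<forall>k'<k. (k' \<in> S) = (k' \<in> A))"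
  then obtain A where "A \<subseteq> {..<k}" "card A = l" "\<forall>k'<k. (k' \<in> S) = (k' \<in> A)" by auto
  moreover from this have "{k'\<in>S. k' < k} = A" by auto
  ultimately show "card {k'\<in>S. k' < k} = l" by simp
qed

lemma pred_en:
  fixes f :: "pt \<Rightarrow> pt"
  assumes [measurable]: "\<And>j k p. bpred borel (\<lambda>x. f x j k p)"
    and inf: "\<And>x. infinite (range (hv j (f x)))"
  shows "bpred borel (\<lambda>x. en j (f x) l = k)"
proof -
  note [measurable] = pred_hv_eq[OF assms(1)]
  have *: "(\<lambda>x. en j (f x) l = k) = (\<lambda>x. (\<forall>k'<k. hv j (f x) k' \<noteq> hv j (f x) k) \<and>
     (\<exists>A\<in>Pow {..<k}. card A = l \<and> (\<forall>k'<k. (\<forall>k''<k'. hv j (f x) k'' \<noteq> hv j (f x) k') = (k' \<in> A))))"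
  proof (rule ext)
    fix x
    have "(en j (f x) l = k) = (k \<in> FO j (f x) \<and> (\<exists>A\<in>Pow {..<k}. card A = l \<and> (\<forall>k'<k. (k' \<in> FO j (f x)) = (k' \<in> A))))"
      unfolding en_def by (simp only: enum_eq_iff[OF FO_inf[OF inf]] card_pred_form)
    then show "(en j (f x) l = k) = ((\<forall>k'<k. hv j (f x) k' \<noteq> hv j (f x) k) \<and>
     (\<exists>A\<in>Pow {..<k}. card A = l \<and> (\<forall>k'<k. (\<forall>k''<k'. hv j (f x) k'' \<noteq> hv j (f x) k') = (k' \<in> A))))"
      by (simp add: FO_def)
  qed
  show ?thesis unfolding * by measurable
qed



lemma inf_R: "enat i < n \<Longrightarrow> infinite (range (hv i (R n x)))"
proof -
  assume i: "enat i < n"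
  have "range (T i) \<subseteq> range (hv i (R n x))"
    using hvR_T[OF i] by (metis image_subsetI rangeI)
  moreover have "infinite (range (T i))"
    using T_inj by (metis finite_imageD injI infinite_UNIV_nat)
  ultimately show "infinite (range (hv i (R n x)))" using finite_subset by blast
qed

lemma pred_R: "bpred borel (\<lambda>x. R n x j k p)"
proof (cases "n \<le> enat j")
  case True
  then have "(\<lambda>x. R n x j k p) = (\<lambda>x. False)" by (simp add: R_def)
  then show ?thesis by simp
next
  case False
  then have nj: "enat j < n" by simp
  show ?thesis
  proof (cases j)
    case 0
    show ?thesis
    proof (cases "k mod 3 = 1")
      case True
      show ?thesis
      proof (cases p)
        case 0 then show ?thesis using nj \<open>j = 0\<close> True by (simp add: R_0)
      next
        case (Suc m)
        then have "(\<lambda>x. R n x j k p) = (\<lambda>x. x 0 (k div 3) m)" using nj \<open>j = 0\<close> True by (simp add: R_0)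
        then show ?thesis using pred_coord by simp
      qed
    next
      case False
      then have "(\<lambda>x. R n x j k p) = (\<lambda>x. tagr (k div 3) p)" using nj \<open>j = 0\<close> by (simp add: R_0)
      then show ?thesis by simp
    qed
  next
    case (Suc i)
    have e: "(\<lambda>x. R n x j k p) = (\<lambda>x. if k mod 3 = 0 then p = k
                 else if k mod 3 = 1 then (p mod 3 = 1 \<and> x (Suc i) (k div 3) (p div 3))
                 else (p = k div 3 \<or> p = 0))"
      using nj Suc by (simp add: R_Suc)
    note [measurable] = pred_coord
    show ?thesis unfolding e by measurable
  qed
qed

lemma pred_D:
  fixes f :: "pt \<Rightarrow> pt"
  assumes [measurable]: "\<And>j k p. bpred borel (\<lambda>x. f x j k p)"
    and inf: "\<And>x i. enat i < n \<Longrightarrow> infinite (range (hv i (f x)))"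
  shows "bpred borel (\<lambda>x. D n (f x) j l p)"
proof (cases "n \<le> enat j")
  case True
  then have "(\<lambda>x. D n (f x) j l p) = (\<lambda>x. False)" by (simp add: D_pad)
  then show ?thesis by simp
next
  case False
  then have nj: "enat j < n" by simp
  show ?thesis
  proof (cases j)
    case 0
    note [measurable] = pred_en[OF assms(1) inf[OF nj[unfolded 0]]]
    have e: "(\<lambda>x. D n (f x) j l p) = (\<lambda>x. \<exists>k. en 0 (f x) l = k \<and> f x 0 k p)"
      using nj 0 by (simp add: D_0)
    show ?thesis unfolding e by measurable
  next
    case (Suc i)
    have ni: "enat i < n" using nj Suc enat_Suc_lt by simp
    note [measurable] = pred_en[OF assms(1) inf[OF nj[unfolded Suc]]] pred_en[OF assms(1) inf[OF ni]]
       pred_hv_eq[OF assms(1)]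
    have e: "(\<lambda>x. D n (f x) j l p) = (\<lambda>x. \<exists>a b k'. en (Suc i) (f x) l = a \<and> en i (f x) p = b \<and>
        f x (Suc i) a k' \<and> hv i (f x) k' = hv i (f x) b)"
      using nj Suc by (auto simp: D_Suc fun_eq_iff)
    show ?thesis unfolding e by measurable
  qed
qed

lemma psi_meas: "(\<lambda>x. D n (R n x)) \<in> borel_measurable borel"
  by (intro meas_pt pred_D pred_R inf_R)



lemma Frel_inf: "Frel \<infinity> a b \<longleftrightarrow> (\<forall>i. range (hv i a) = range (hv i b))"
proof -
  have "Frel \<infinity> a b \<longleftrightarrow> (\<forall>i. seteq_A (Suc i) a b)"
  proof -
    have "Frel \<infinity> a b \<longleftrightarrow> (\<forall>j\<ge>1. seteq_A j a b)" unfolding Frel_def by simp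
    also have "\<dots> \<longleftrightarrow> (\<forall>i. seteq_A (Suc i) a b)"
    proof
      assume h: "\<forall>j\<ge>1. seteq_A j a b"
      show "\<forall>i. seteq_A (Suc i) a b"
      proof
        fix i show "seteq_A (Suc i) a b" using h[rule_format, of "Suc i"] by simp
      qed
    next
      assume h: "\<forall>i. seteq_A (Suc i) a b"
      show "\<forall>j\<ge>1. seteq_A j a b"
      proof (intro allI impI)
        fix j :: nat assume "1 \<le> j"
        then have "j = Suc (j - 1)" by simp
        then show "seteq_A j a b" using h by metis
      qed
    qed
    finally show ?thesis .
  qed
  then show ?thesis by (simp only: seteqA_hv)
qed

lemma Frel_fin: "Frel (enat (Suc m)) a b \<longleftrightarrow> range (hv m a) = range (hv m b)"
  unfolding Frel_def enat.case seteqA_hv by (rule refl)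

lemma range_psi: "x \<in> Xsp n \<Longrightarrow> enat j < n \<Longrightarrow> range (hv j (D n (R n x))) = range (hv j (R n x))"
proof -
  assume x: "x \<in> Xsp n" and j: "enat j < n"
  interpret Dloc2 n "R n x" using Dloc2_R[OF x] .
  show ?thesis using range_D[OF j] .
qed

lemma red: assumes n: "1 \<le> n" and x: "x \<in> Xsp n" and y: "y \<in> Xsp n"
  shows "Frel n x y \<longleftrightarrow> Frel n (D n (R n x)) (D n (R n y))"
proof (cases n)
  case infinity
  have "(\<forall>i. range (hv i x) = range (hv i y)) \<longleftrightarrow> (\<forall>i. range (hv i (R n x)) = range (hv i (R n y)))"
  proof
    assume h: "\<forall>i. range (hv i x) = range (hv i y)"
    show "\<forall>i. range (hv i (R n x)) = range (hv i (R n y))"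
    proof
      fix i have "enat i < n" using infinity by simp
      then show "range (hv i (R n x)) = range (hv i (R n y))" using R_fwd[of i n x y] h by blast
    qed
  next
    assume h: "\<forall>i. range (hv i (R n x)) = range (hv i (R n y))"
    show "\<forall>i. range (hv i x) = range (hv i y)"
    proof
      fix i have "enat i < n" using infinity by simp
      then show "range (hv i x) = range (hv i y)" using R_back[of i n x y] h by blast
    qed
  qed
  also have "\<dots> \<longleftrightarrow> (\<forall>i. range (hv i (D n (R n x))) = range (hv i (D n (R n y))))"
  proof -
    have "\<And>i. enat i < n" using infinity by simp
    then show ?thesis using range_psi[OF x] range_psi[OF y] by presburger
  qed
  finally show ?thesis using infinity by (simp add: Frel_inf)
next
  case (enat m')
  then obtain m where m: "n = enat (Suc m)" using n by (cases m') (auto simp: one_enat_def)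
  have mn: "enat m < n" using m by simp
  have "range (hv m x) = range (hv m y) \<longleftrightarrow> range (hv m (R n x)) = range (hv m (R n y))"
  proof
    assume "range (hv m x) = range (hv m y)"
    then have "\<forall>i\<le>m. range (hv i x) = range (hv i y)" using down[OF x y mn] by blast
    then show "range (hv m (R n x)) = range (hv m (R n y))" using R_fwd[OF mn] by blast
  next
    assume "range (hv m (R n x)) = range (hv m (R n y))"
    then show "range (hv m x) = range (hv m y)" using R_back[OF mn] by blast
  qed
  also have "\<dots> \<longleftrightarrow> range (hv m (D n (R n x))) = range (hv m (D n (R n y)))"
    using range_psi[OF x mn] range_psi[OF y mn] by simp
  finally show ?thesis using m by (simp add: Frel_fin)
qed

theorem lemma5p2:
  fixes n :: enat
  assumes "1 \<le> n"
  shows "\<exists>\<psi>. borel_reduction (Xsp n) (Frel n) (Frel n) \<psi> \<and>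
    (\<forall>x \<in> \<psi> ` Xsp n.
       (\<forall>i. enat i < n \<longrightarrow> injective_seq (x i)) \<and>
       (\<forall>i. 0 < i \<and> enat i < n \<longrightarrow> separated_seq (x i)))"
proof (intro exI conjI)
  let ?psi = "\<lambda>x. D n (R n x)"
  have into: "?psi x \<in> Xsp n" if x: "x \<in> Xsp n" for x
  proof -
    interpret Dloc2 n "R n x" using Dloc2_R[OF x] .
    show ?thesis by (rule D_Xsp)
  qed
  show "borel_reduction (Xsp n) (Frel n) (Frel n) ?psi"
    unfolding borel_reduction_def
  proof (intro conjI ballI)
    show "?psi \<in> restrict_space borel (Xsp n) \<rightarrow>\<^sub>M restrict_space borel (Xsp n)"
    proof (rule measurable_restrict_space2)
      show "?psi \<in> space (restrict_space borel (Xsp n)) \<rightarrow> Xsp n"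
        using into by (auto simp: space_restrict_space)
      show "?psi \<in> restrict_space borel (Xsp n) \<rightarrow>\<^sub>M borel"
        by (rule measurable_restrict_space1) (rule psi_meas)
    qed
  next
    fix x y assume "x \<in> Xsp n" "y \<in> Xsp n"
    then show "Frel n x y = Frel n (?psi x) (?psi y)" using red[OF assms] by blast
  qed
  show "\<forall>x' \<in> ?psi ` Xsp n. (\<forall>i. enat i < n \<longrightarrow> injective_seq (x' i)) \<and>
       (\<forall>i. 0 < i \<and> enat i < n \<longrightarrow> separated_seq (x' i))"
  proof
    fix x' assume "x' \<in> ?psi ` Xsp n"
    then obtain x where x: "x \<in> Xsp n" and x': "x' = ?psi x" by auto
    interpret Dloc2 n "R n x" using Dloc2_R[OF x] .
    show "(\<forall>i. enat i < n \<longrightarrow> injective_seq (x' i)) \<and> (\<forall>i. 0 < i \<and> enat i < n \<longrightarrow> separated_seq (x' i))"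
      using D_injective D_separated x' by blast
  qed
qed

end
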